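(* Let $(e_n)$ be a uniformly quasi-greedy basic sequence in a Banach lattice $X$. Then $\mathbf{k}^\vee_m=\mathcal{O}(\log_2 m)$ as $m\to\infty$.
   Context: $(e_n)$ is a semi-normalized basic sequence with span $E$ and biorthogonal functionals $e_n^*$. For $x\in E$, the natural greedy ordering $\rho$ lists indices by non-increasing $|e_n^*(x)|$ (ties broken by increasing index, range containing $\{n:e_n^*(x)\ne0\}$); $\mathcal{G}_m(x)=\sum_{n=1}^m e^*_{\rho(n)}(x)e_{\rho(n)}$. The sequence is uniformly quasi-greedy if $\sup_m\sup_{\|x\|=1}\|\bigvee_{n\le m}|\mathcal{G}_n(x)|\|<\infty$. For an ordered finite set $A=\{n_1,\dots,n_m\}\subseteq\mathbb{N}$, $P^\vee_A(x)=\bigvee_{i=1}^m\big|\sum_{k=1}^ie^*_{n_k}(x)e_{n_k}\big|$ and $\|P^\vee_A\|=\sup_{x\in E,\|x\|=1}\|P^\vee_A(x)\|$. Finally $\mathbf{k}^\vee_m=\sup\{\|P^\vee_A\|: A \text{ an ordered subset of }\mathbb{N},\ |A|\le m\}$. *)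

theory Defs
  imports "HOL-Analysis.Analysis" "HOL-Library.Lattice_Algebras" "HOL-Library.Landau_Symbols"
begin

text \<open>Banach lattice: real Banach space, vector lattice (ordered real vector space
  whose order is a lattice), with absolute value |x| = sup x (-x), and a lattice norm.\<close>
class banach_lattice = banach + ordered_real_vector + lattice_ab_group_add_abs +
  assumes lattice_norm: "\<bar>x\<bar> \<le> \<bar>y\<bar> \<Longrightarrow> norm x \<le> norm y"

text \<open>Closed linear span of the sequence.\<close>
definition cspan :: "(nat \<Rightarrow> 'a::real_normed_vector) \<Rightarrow> 'a set" where
  "cspan e = closure (span (range e))"

text \<open>Basic sequence: a Schauder basis of its closed linear span.\<close>
definition basic_sequence :: "(nat \<Rightarrow> 'a::real_normed_vector) \<Rightarrow> bool" where
  "basic_sequence e \<longleftrightarrow>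
     (\<forall>x \<in> cspan e. \<exists>!a::nat \<Rightarrow> real. (\<lambda>N. \<Sum>k<N. a k *\<^sub>R e k) \<longlonglongrightarrow> x)"

definition semi_normalized :: "(nat \<Rightarrow> 'a::real_normed_vector) \<Rightarrow> bool" where
  "semi_normalized e \<longleftrightarrow> (\<exists>c C. 0 < c \<and> (\<forall>n. c \<le> norm (e n) \<and> norm (e n) \<le> C))"

text \<open>Biorthogonal (coefficient) functionals: coef e n x = e_n^*(x).\<close>
definition coef :: "(nat \<Rightarrow> 'a::real_normed_vector) \<Rightarrow> nat \<Rightarrow> 'a \<Rightarrow> real" where
  "coef e n x = (THE a::nat \<Rightarrow> real. (\<lambda>N. \<Sum>k<N. a k *\<^sub>R e k) \<longlonglongrightarrow> x) n"

text \<open>Greedy order: i precedes j iff |a i| > |a j|, ties broken by increasing index.\<close>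
definition greedy_prec :: "(nat \<Rightarrow> real) \<Rightarrow> nat \<Rightarrow> nat \<Rightarrow> bool" where
  "greedy_prec a i j \<longleftrightarrow> \<bar>a j\<bar> < \<bar>a i\<bar> \<or> (\<bar>a i\<bar> = \<bar>a j\<bar> \<and> i < j)"

text \<open>Position (0-based) of an index j of the support in the natural greedy ordering.\<close>
definition greedy_rank :: "(nat \<Rightarrow> real) \<Rightarrow> nat \<Rightarrow> nat" where
  "greedy_rank a j = card {i. a i \<noteq> 0 \<and> greedy_prec a i j}"

text \<open>The indices rho(1),...,rho(m) carrying nonzero coefficients.\<close>
definition greedy_set :: "(nat \<Rightarrow> real) \<Rightarrow> nat \<Rightarrow> nat set" where
  "greedy_set a m = {j. a j \<noteq> 0 \<and> greedy_rank a j < m}"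

text \<open>Greedy approximant G_m(x).\<close>
definition greedy_approx :: "(nat \<Rightarrow> 'a::real_normed_vector) \<Rightarrow> nat \<Rightarrow> 'a \<Rightarrow> 'a" where
  "greedy_approx e m x = (\<Sum>j \<in> greedy_set (\<lambda>n. coef e n x) m. coef e j x *\<^sub>R e j)"

text \<open>Finite lattice supremum of a list (of positive elements; empty sup is 0).\<close>
fun lsup :: "'a::{lattice, zero} list \<Rightarrow> 'a" where
  "lsup [] = 0"
| "lsup [x] = x"
| "lsup (x # y # xs) = sup x (lsup (y # xs))"

definition uniformly_quasi_greedy :: "(nat \<Rightarrow> 'a::banach_lattice) \<Rightarrow> bool" where
  "uniformly_quasi_greedy e \<longleftrightarrow>
     (\<exists>C. \<forall>m. \<forall>x \<in> cspan e. norm x = 1 \<longrightarrow>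
        norm (lsup (map (\<lambda>n. \<bar>greedy_approx e n x\<bar>) [1..<m+1])) \<le> C)"

text \<open>P^vee_A(x) for an ordered finite set A = [n_1,...,n_k] (distinct list).\<close>
definition Pvee :: "(nat \<Rightarrow> 'a::banach_lattice) \<Rightarrow> nat list \<Rightarrow> 'a \<Rightarrow> 'a" where
  "Pvee e A x = lsup (map (\<lambda>i. \<bar>\<Sum>k<i. coef e (A ! k) x *\<^sub>R e (A ! k)\<bar>) [1..<length A + 1])"

definition Pvee_norm :: "(nat \<Rightarrow> 'a::banach_lattice) \<Rightarrow> nat list \<Rightarrow> real" where
  "Pvee_norm e A = Sup {norm (Pvee e A x) | x. x \<in> cspan e \<and> norm x = 1}"

definition kvee :: "(nat \<Rightarrow> 'a::banach_lattice) \<Rightarrow> nat \<Rightarrow> real" where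
  "kvee e m = Sup {Pvee_norm e A | A. distinct A \<and> length A \<le> m}"

end

theory Submission
  imports Defs
begin


lemma scaleR_sup_pos:
  fixes x y :: "'a::banach_lattice"
  assumes "0 < c" shows "c *\<^sub>R sup x y = sup (c *\<^sub>R x) (c *\<^sub>R y)"
proof (rule antisym)
  have "x \<le> (1/c) *\<^sub>R sup (c *\<^sub>R x) (c *\<^sub>R y)"
  proof -
    have "x = (1/c) *\<^sub>R (c *\<^sub>R x)" using assms by simp
    also have "\<dots> \<le> (1/c) *\<^sub>R sup (c *\<^sub>R x) (c *\<^sub>R y)"
      by (rule scaleR_left_mono) (use assms in auto)
    finally show ?thesis .
  qed
  moreover have "y \<le> (1/c) *\<^sub>R sup (c *\<^sub>R x) (c *\<^sub>R y)"
  proof -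
    have "y = (1/c) *\<^sub>R (c *\<^sub>R y)" using assms by simp
    also have "\<dots> \<le> (1/c) *\<^sub>R sup (c *\<^sub>R x) (c *\<^sub>R y)"
      by (rule scaleR_left_mono) (use assms in auto)
    finally show ?thesis .
  qed
  ultimately have "sup x y \<le> (1/c) *\<^sub>R sup (c *\<^sub>R x) (c *\<^sub>R y)" by simp
  hence "c *\<^sub>R sup x y \<le> c *\<^sub>R ((1/c) *\<^sub>R sup (c *\<^sub>R x) (c *\<^sub>R y))"
    by (rule scaleR_left_mono) (use assms in auto)
  thus "c *\<^sub>R sup x y \<le> sup (c *\<^sub>R x) (c *\<^sub>R y)" using assms by simp
  show "sup (c *\<^sub>R x) (c *\<^sub>R y) \<le> c *\<^sub>R sup x y"
    using assms by (auto intro!: scaleR_left_mono)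
qed

lemma abs_scaleR_pos:
  fixes x :: "'a::banach_lattice"
  assumes "0 \<le> c" shows "\<bar>c *\<^sub>R x\<bar> = c *\<^sub>R \<bar>x\<bar>"
proof (cases "c = 0")
  case True thus ?thesis by simp
next
  case False
  hence "0 < c" using assms by simp
  thus ?thesis by (simp add: abs_lattice scaleR_sup_pos)
qed

lemma abs_scaleR_bl:
  fixes x :: "'a::banach_lattice"
  shows "\<bar>c *\<^sub>R x\<bar> = \<bar>c\<bar> *\<^sub>R \<bar>x\<bar>"
proof (cases "0 \<le> c")
  case True thus ?thesis by (simp add: abs_scaleR_pos)
next
  case False
  have "\<bar>c *\<^sub>R x\<bar> = \<bar>(-c) *\<^sub>R (- x)\<bar>" by simp
  also have "\<dots> = (-c) *\<^sub>R \<bar>-x\<bar>" using False by (intro abs_scaleR_pos) auto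
  finally show ?thesis using False by simp
qed

lemma norm_abs_bl: "norm \<bar>x::'a::banach_lattice\<bar> = norm x"
  by (rule antisym; rule lattice_norm; simp)

lemma norm_mono_bl:
  fixes x y :: "'a::banach_lattice"
  assumes "0 \<le> x" "x \<le> y" shows "norm x \<le> norm y"
proof -
  have "0 \<le> y" using assms by simp
  thus ?thesis using assms by (intro lattice_norm) (simp add: abs_of_nonneg)
qed

lemma lsup_ge: "y \<in> set xs \<Longrightarrow> y \<le> lsup (xs::'a::{lattice,zero} list)"
  by (induction xs rule: lsup.induct) (auto intro: le_supI2)

lemma lsup_le: "(\<And>y. y \<in> set xs \<Longrightarrow> y \<le> b) \<Longrightarrow> 0 \<le> b \<Longrightarrow> lsup (xs::'a::{lattice,zero} list) \<le> b"
  by (induction xs rule: lsup.induct) auto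

lemma lsup_nonneg: "(\<And>y. y \<in> set xs \<Longrightarrow> 0 \<le> y) \<Longrightarrow> 0 \<le> lsup (xs::'a::{lattice,zero} list)"
  by (induction xs rule: lsup.induct) (auto intro: le_supI1)

definition chain :: "(nat \<Rightarrow> 'a::banach_lattice) \<Rightarrow> nat \<Rightarrow> (nat \<Rightarrow> real) \<Rightarrow> 'a" where
  "chain f L c = lsup (map (\<lambda>i. \<bar>\<Sum>k<i. c k *\<^sub>R f k\<bar>) [1..<L+1])"

lemma chain_nonneg: "0 \<le> chain f L c"
  unfolding chain_def by (rule lsup_nonneg) auto

lemma chain_ge: "1 \<le> i \<Longrightarrow> i \<le> L \<Longrightarrow> \<bar>\<Sum>k<i. c k *\<^sub>R f k\<bar> \<le> chain f L c"
  unfolding chain_def by (intro lsup_ge) (force simp: image_iff)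

lemma chain_le: "(\<And>i. 1 \<le> i \<Longrightarrow> i \<le> L \<Longrightarrow> \<bar>\<Sum>k<i. c k *\<^sub>R f k\<bar> \<le> b) \<Longrightarrow> 0 \<le> b \<Longrightarrow> chain f L c \<le> b"
  unfolding chain_def by (rule lsup_le) auto

lemma chain_add: "chain f L (\<lambda>k. c k + d k) \<le> chain f L c + chain f L d"
proof (rule chain_le)
  fix i assume i: "1 \<le> i" "i \<le> L"
  have "\<bar>\<Sum>k<i. (c k + d k) *\<^sub>R f k\<bar> = \<bar>(\<Sum>k<i. c k *\<^sub>R f k) + (\<Sum>k<i. d k *\<^sub>R f k)\<bar>"
    by (simp add: scaleR_add_left sum.distrib)
  also have "\<dots> \<le> \<bar>\<Sum>k<i. c k *\<^sub>R f k\<bar> + \<bar>\<Sum>k<i. d k *\<^sub>R f k\<bar>" by (rule abs_triangle_ineq)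
  also have "\<dots> \<le> chain f L c + chain f L d" using i by (intro add_mono chain_ge)
  finally show "\<bar>\<Sum>k<i. (c k + d k) *\<^sub>R f k\<bar> \<le> chain f L c + chain f L d" .
qed (simp add: chain_nonneg add_nonneg_nonneg)

lemma chain_scale: "0 \<le> v \<Longrightarrow> chain f L (\<lambda>k. v * c k) \<le> v *\<^sub>R chain f L c"
proof (rule chain_le)
  fix i assume v: "0 \<le> v" and i: "1 \<le> i" "i \<le> L"
  have "\<bar>\<Sum>k<i. (v * c k) *\<^sub>R f k\<bar> = \<bar>v *\<^sub>R (\<Sum>k<i. c k *\<^sub>R f k)\<bar>"
    by (simp add: scaleR_sum_right)
  also have "\<dots> = v *\<^sub>R \<bar>\<Sum>k<i. c k *\<^sub>R f k\<bar>" using v by (simp add: abs_scaleR_pos)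
  also have "\<dots> \<le> v *\<^sub>R chain f L c" using v i by (intro scaleR_left_mono chain_ge)
  finally show "\<bar>\<Sum>k<i. (v * c k) *\<^sub>R f k\<bar> \<le> v *\<^sub>R chain f L c" .
qed (auto intro!: scaleR_nonneg_nonneg chain_nonneg)

lemma chain_norm_add: "norm (chain f L (\<lambda>k. c k + d k)) \<le> norm (chain f L c) + norm (chain f L d)"
proof -
  have "norm (chain f L (\<lambda>k. c k + d k)) \<le> norm (chain f L c + chain f L d)"
    by (intro norm_mono_bl chain_nonneg chain_add)
  also have "\<dots> \<le> norm (chain f L c) + norm (chain f L d)" by (rule norm_triangle_ineq)
  finally show ?thesis .
qed

lemma chain_norm_scale: "0 \<le> v \<Longrightarrow> norm (chain f L (\<lambda>k. v * c k)) \<le> v * norm (chain f L c)"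
proof -
  assume v: "0 \<le> v"
  have "norm (chain f L (\<lambda>k. v * c k)) \<le> norm (v *\<^sub>R chain f L c)"
    using v by (intro norm_mono_bl chain_nonneg chain_scale)
  thus ?thesis using v by simp
qed

lemma chain_zero: "chain f L (\<lambda>k. 0) = 0"
  by (rule antisym[OF chain_le chain_nonneg]) auto

lemma chain_le_sum: "chain f L c \<le> (\<Sum>k<L. \<bar>c k\<bar> *\<^sub>R \<bar>f k\<bar>)"
proof (rule chain_le)
  fix i assume i: "1 \<le> i" "i \<le> L"
  have "\<bar>\<Sum>k<i. c k *\<^sub>R f k\<bar> \<le> (\<Sum>k<i. \<bar>c k *\<^sub>R f k\<bar>)" by (rule sum_abs)
  also have "\<dots> = (\<Sum>k<i. \<bar>c k\<bar> *\<^sub>R \<bar>f k\<bar>)" by (simp add: abs_scaleR_bl)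
  also have "\<dots> \<le> (\<Sum>k<L. \<bar>c k\<bar> *\<^sub>R \<bar>f k\<bar>)"
    using i by (intro sum_mono2) (auto intro!: scaleR_nonneg_nonneg)
  finally show "\<bar>\<Sum>k<i. c k *\<^sub>R f k\<bar> \<le> (\<Sum>k<L. \<bar>c k\<bar> *\<^sub>R \<bar>f k\<bar>)" .
qed (auto intro!: sum_nonneg scaleR_nonneg_nonneg)

lemma chain_norm_le_sum: "norm (chain f L c) \<le> (\<Sum>k<L. \<bar>c k\<bar> * norm (f k))"
proof -
  have "norm (chain f L c) \<le> norm (\<Sum>k<L. \<bar>c k\<bar> *\<^sub>R \<bar>f k\<bar>)"
    by (intro norm_mono_bl chain_nonneg chain_le_sum)
  also have "\<dots> \<le> (\<Sum>k<L. norm (\<bar>c k\<bar> *\<^sub>R \<bar>f k\<bar>))" by (rule norm_sum)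
  also have "\<dots> = (\<Sum>k<L. \<bar>c k\<bar> * norm (f k))" by (simp add: norm_abs_bl)
  finally show ?thesis .
qed

lemma chain_norm_sum:
  assumes "finite J"
  shows "norm (chain f L (\<lambda>k. \<Sum>j\<in>J. c j k)) \<le> (\<Sum>j\<in>J. norm (chain f L (c j)))"
  using assms
proof (induction J rule: finite_induct)
  case empty thus ?case by (simp add: chain_zero)
next
  case (insert j J)
  have "norm (chain f L (\<lambda>k. \<Sum>j\<in>insert j J. c j k)) = norm (chain f L (\<lambda>k. c j k + (\<Sum>j\<in>J. c j k)))"
    using insert by simp
  also have "\<dots> \<le> norm (chain f L (c j)) + norm (chain f L (\<lambda>k. \<Sum>j\<in>J. c j k))"
    by (rule chain_norm_add)
  also have "\<dots> \<le> norm (chain f L (c j)) + (\<Sum>j\<in>J. norm (chain f L (c j)))"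
    using insert by simp
  finally show ?case using insert by simp
qed



lemma span_sum_in: "(\<Sum>j\<in>F. b j *\<^sub>R e j) \<in> span (range e)"
  by (rule span_sum) (rule span_scale, rule span_base, simp)

lemma in_cspan_lim:
  assumes "(\<lambda>N. \<Sum>k<N. b k *\<^sub>R e k) \<longlonglongrightarrow> y"
  shows "y \<in> cspan e"
  unfolding cspan_def closure_sequential
  by (rule exI[where x="\<lambda>N. \<Sum>k<N. b k *\<^sub>R e k"])
     (use assms in \<open>auto intro: span_sum_in\<close>)

lemma sum_in_cspan: "(\<Sum>j\<in>F. b j *\<^sub>R e j) \<in> cspan e"
  unfolding cspan_def
  by (rule set_mp[OF closure_subset]) (rule span_sum_in)

lemma e_in_cspan: "e n \<in> cspan e"
  unfolding cspan_def
  by (rule set_mp[OF closure_subset]) (auto intro!: span_base)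

lemma coef_sums:
  assumes "basic_sequence e" "x \<in> cspan e"
  shows "(\<lambda>N. \<Sum>k<N. coef e k x *\<^sub>R e k) \<longlonglongrightarrow> x"
proof -
  have "\<exists>!a::nat \<Rightarrow> real. (\<lambda>N. \<Sum>k<N. a k *\<^sub>R e k) \<longlonglongrightarrow> x"
    using assms unfolding basic_sequence_def by blast
  from theI'[OF this] show ?thesis unfolding coef_def .
qed

lemma coef_unique:
  assumes "basic_sequence e" "x \<in> cspan e" "(\<lambda>N. \<Sum>k<N. b k *\<^sub>R e k) \<longlonglongrightarrow> x"
  shows "coef e n x = b n"
proof -
  have "\<exists>!a::nat \<Rightarrow> real. (\<lambda>N. \<Sum>k<N. a k *\<^sub>R e k) \<longlonglongrightarrow> x"
    using assms unfolding basic_sequence_def by blast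
  hence "(THE a::nat \<Rightarrow> real. (\<lambda>N. \<Sum>k<N. a k *\<^sub>R e k) \<longlonglongrightarrow> x) = b"
    by (rule the1_equality[where P="\<lambda>a. (\<lambda>N. \<Sum>k<N. a k *\<^sub>R e k) \<longlonglongrightarrow> x", OF _ assms(3)])
  thus ?thesis unfolding coef_def by simp
qed

lemma coef_finite:
  assumes "basic_sequence e" "finite F"
  shows "coef e n (\<Sum>j\<in>F. b j *\<^sub>R e j) = (if n \<in> F then b n else 0)"
proof -
  define b' where "b' n = (if n \<in> F then b n else 0)" for n
  obtain M where M: "\<And>j. j \<in> F \<Longrightarrow> j < M"
    using assms(2) finite_nat_bounded by blast
  have "eventually (\<lambda>N. (\<Sum>k<N. b' k *\<^sub>R e k) = (\<Sum>j\<in>F. b j *\<^sub>R e j)) sequentially"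
    unfolding eventually_sequentially
  proof (intro exI allI impI)
    fix N assume "M \<le> N"
    hence FN: "F \<subseteq> {..<N}" using M by force
    have "(\<Sum>k<N. b' k *\<^sub>R e k) = (\<Sum>k\<in>F. b' k *\<^sub>R e k)"
      by (rule sum.mono_neutral_right) (use FN in \<open>auto simp: b'_def\<close>)
    also have "\<dots> = (\<Sum>j\<in>F. b j *\<^sub>R e j)" by (simp add: b'_def)
    finally show "(\<Sum>k<N. b' k *\<^sub>R e k) = (\<Sum>j\<in>F. b j *\<^sub>R e j)" .
  qed
  hence "(\<lambda>N. \<Sum>k<N. b' k *\<^sub>R e k) \<longlonglongrightarrow> (\<Sum>j\<in>F. b j *\<^sub>R e j)"
    by (rule tendsto_eventually)
  from coef_unique[OF assms(1) sum_in_cspan this] show ?thesis by (simp add: b'_def)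
qed

lemma coef_zero:
  assumes "basic_sequence e" shows "coef e n 0 = 0"
  using coef_finite[OF assms, of "{}"] by simp

lemma coef_scale:
  assumes "basic_sequence e" "x \<in> cspan e"
  shows "coef e n (c *\<^sub>R x) = c * coef e n x"
proof -
  have "(\<lambda>N. c *\<^sub>R (\<Sum>k<N. coef e k x *\<^sub>R e k)) \<longlonglongrightarrow> c *\<^sub>R x"
    by (intro tendsto_scaleR tendsto_const coef_sums assms)
  hence lim: "(\<lambda>N. \<Sum>k<N. (c * coef e k x) *\<^sub>R e k) \<longlonglongrightarrow> c *\<^sub>R x"
    by (simp add: scaleR_sum_right)
  show ?thesis using coef_unique[OF assms(1) in_cspan_lim[OF lim] lim] .
qed

lemma scale_in_cspan:
  assumes "basic_sequence e" "x \<in> cspan e"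
  shows "c *\<^sub>R x \<in> cspan e"
proof -
  have "(\<lambda>N. c *\<^sub>R (\<Sum>k<N. coef e k x *\<^sub>R e k)) \<longlonglongrightarrow> c *\<^sub>R x"
    by (intro tendsto_scaleR tendsto_const coef_sums assms)
  hence lim: "(\<lambda>N. \<Sum>k<N. (c * coef e k x) *\<^sub>R e k) \<longlonglongrightarrow> c *\<^sub>R x"
    by (simp add: scaleR_sum_right)
  show ?thesis using in_cspan_lim[OF lim] .
qed

lemma coef_tendsto0:
  assumes "basic_sequence e" "semi_normalized e" "x \<in> cspan e"
  shows "(\<lambda>n. coef e n x) \<longlonglongrightarrow> 0"
proof -
  obtain c C where c: "0 < c" "\<And>n. c \<le> norm (e n)"
    using assms(2) unfolding semi_normalized_def by blast
  have "summable (\<lambda>k. coef e k x *\<^sub>R e k)"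
    using coef_sums[OF assms(1,3)] unfolding summable_def sums_def by blast
  hence "(\<lambda>k. coef e k x *\<^sub>R e k) \<longlonglongrightarrow> 0" by (rule summable_LIMSEQ_zero)
  hence lim0: "(\<lambda>k. norm (coef e k x *\<^sub>R e k) / c) \<longlonglongrightarrow> 0"
    by (rule tendsto_divide_zero[OF tendsto_norm_zero])
  moreover have bnd: "norm (coef e k x) \<le> norm (coef e k x *\<^sub>R e k) / c" for k
  proof -
    have "\<bar>coef e k x\<bar> * c \<le> \<bar>coef e k x\<bar> * norm (e k)" using c by (intro mult_left_mono) auto
    thus ?thesis using c by (simp add: field_simps)
  qed
  show ?thesis
  proof (rule Lim_null_comparison)
    show "\<forall>\<^sub>F k in sequentially. norm (coef e k x) \<le> norm (coef e k x *\<^sub>R e k) / c"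
      by (rule always_eventually) (use bnd in blast)
    show "(\<lambda>k. norm (coef e k x *\<^sub>R e k) / c) \<longlonglongrightarrow> 0" by fact
  qed
qed

definition thr :: "(nat \<Rightarrow> real) \<Rightarrow> real \<Rightarrow> nat set" where
  "thr a u = {n. u < \<bar>a n\<bar>}"

lemma finite_thr:
  assumes "basic_sequence e" "semi_normalized e" "x \<in> cspan e" "0 < u"
  shows "finite (thr (\<lambda>n. coef e n x) u)"
proof -
  have "eventually (\<lambda>n. norm (coef e n x - 0) < u) sequentially"
    using coef_tendsto0[OF assms(1-3)] assms(4) unfolding tendsto_iff dist_norm by blast
  then obtain N where N: "\<And>n. n \<ge> N \<Longrightarrow> \<bar>coef e n x\<bar> < u"
    unfolding eventually_sequentially by auto
  have "thr (\<lambda>n. coef e n x) u \<subseteq> {..<N}"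
  proof
    fix n assume "n \<in> thr (\<lambda>n. coef e n x) u"
    thus "n \<in> {..<N}" using N[of n] by (cases "N \<le> n") (auto simp: thr_def)
  qed
  thus ?thesis by (rule finite_subset) simp
qed



lemma greedy_prec_irrefl: "\<not> greedy_prec a i i"
  by (simp add: greedy_prec_def)

lemma greedy_set_scale:
  assumes "c \<noteq> 0"
  shows "greedy_set (\<lambda>n. c * a n) r = greedy_set a r"
proof -
  have p: "greedy_prec (\<lambda>n. c * a n) i j = greedy_prec a i j" for i j
    using assms by (auto simp: greedy_prec_def abs_mult)
  have "greedy_rank (\<lambda>n. c * a n) j = greedy_rank a j" for j
    unfolding greedy_rank_def p using assms by simp
  thus ?thesis unfolding greedy_set_def using assms by simp
qed

lemma prec_set_finite:
  assumes fin: "\<And>v. 0 < v \<Longrightarrow> finite (thr a v)" and "a j \<noteq> 0"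
  shows "finite {i. a i \<noteq> 0 \<and> greedy_prec a i j}"
proof -
  have "{i. a i \<noteq> 0 \<and> greedy_prec a i j} \<subseteq> thr a (\<bar>a j\<bar>/2)"
    using assms(2) by (auto simp: thr_def greedy_prec_def)
  moreover have "finite (thr a (\<bar>a j\<bar>/2))" using assms by (intro fin) simp
  ultimately show ?thesis by (rule finite_subset)
qed

lemma greedy_set_thr:
  assumes fin: "\<And>v. 0 < v \<Longrightarrow> finite (thr a v)" and u: "0 < u"
  shows "greedy_set a (card (thr a u)) = thr a u"
proof (intro set_eqI iffI)
  have ft: "finite (thr a u)" using fin u by blast
  fix j
  assume j: "j \<in> greedy_set a (card (thr a u))"
  hence aj: "a j \<noteq> 0" and r: "greedy_rank a j < card (thr a u)" by (auto simp: greedy_set_def)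
  show "j \<in> thr a u"
  proof (rule ccontr)
    assume "j \<notin> thr a u"
    hence "thr a u \<subseteq> {i. a i \<noteq> 0 \<and> greedy_prec a i j}"
      using u by (auto simp: thr_def greedy_prec_def)
    hence "card (thr a u) \<le> greedy_rank a j"
      unfolding greedy_rank_def by (intro card_mono prec_set_finite[OF fin aj])
    thus False using r by simp
  qed
next
  have ft: "finite (thr a u)" using fin u by blast
  fix j assume j: "j \<in> thr a u"
  hence aj: "a j \<noteq> 0" using u by (auto simp: thr_def)
  have "{i. a i \<noteq> 0 \<and> greedy_prec a i j} \<subseteq> thr a u - {j}"
    using j by (auto simp: thr_def greedy_prec_def)
  hence "greedy_rank a j \<le> card (thr a u - {j})"
    unfolding greedy_rank_def by (intro card_mono) (use ft in auto)
  also have "\<dots> < card (thr a u)" using ft j by (intro card_Diff1_less)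
  finally show "j \<in> greedy_set a (card (thr a u))" using aj by (simp add: greedy_set_def)
qed

lemma card_lt_mono:
  fixes S :: "nat set"
  assumes "finite S" "k \<in> S"
  shows "card {k'\<in>S. k' < k} < card {k'\<in>S. k' < i} \<longleftrightarrow> k < i"
proof
  assume "k < i"
  hence "{k'\<in>S. k' < k} \<subset> {k'\<in>S. k' < i}" using assms by auto
  thus "card {k'\<in>S. k' < k} < card {k'\<in>S. k' < i}" using assms by (intro psubset_card_mono) auto
next
  assume c: "card {k'\<in>S. k' < k} < card {k'\<in>S. k' < i}"
  show "k < i"
  proof (rule ccontr)
    assume "\<not> k < i"
    hence "{k'\<in>S. k' < i} \<subseteq> {k'\<in>S. k' < k}" by auto
    hence "card {k'\<in>S. k' < i} \<le> card {k'\<in>S. k' < k}" using assms by (intro card_mono) auto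
    thus False using c by simp
  qed
qed

lemma greedy_set_chain:
  fixes b :: "nat \<Rightarrow> real" and A :: "nat list"
  assumes dist: "distinct A" and L: "length A = L" and S: "S \<subseteq> {..<L}"
    and D: "finite D" and SD: "\<And>k. k \<in> S \<Longrightarrow> A ! k \<in> D"
    and bD: "\<And>n. b n \<noteq> 0 \<longleftrightarrow> n \<in> D"
    and bS: "\<And>k. k \<in> S \<Longrightarrow> \<bar>b (A ! k)\<bar> = 1 + \<delta> * (real L - real k)"
    and bO: "\<And>n. n \<in> D \<Longrightarrow> n \<notin> (\<lambda>k. A ! k) ` S \<Longrightarrow> \<bar>b n\<bar> = 1"
    and \<delta>: "0 < \<delta>"
  shows "greedy_set b (card {k\<in>S. k < i}) = (\<lambda>k. A ! k) ` {k\<in>S. k < i}"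
proof -
  have finS: "finite S" using S finite_subset by blast
  have inj: "inj_on (\<lambda>k. A ! k) S"
  proof (rule inj_onI)
    fix x y assume "x \<in> S" "y \<in> S" "A ! x = A ! y"
    thus "x = y" using dist S L nth_eq_iff_index_eq[OF dist, of x y] by auto
  qed
  have gt1: "1 < \<bar>b (A ! k)\<bar>" if "k \<in> S" for k
  proof -
    have "k < L" using S that by auto
    hence "0 < \<delta> * (real L - real k)" using \<delta> by simp
    thus ?thesis using bS[OF that] by simp
  qed
  have rankS: "greedy_rank b (A ! k) = card {k'\<in>S. k' < k}" if k: "k \<in> S" for k
  proof -
    have "{i. b i \<noteq> 0 \<and> greedy_prec b i (A ! k)} = (\<lambda>k. A ! k) ` {k'\<in>S. k' < k}"
    proof (intro set_eqI iffI)
      fix j assume j: "j \<in> {i. b i \<noteq> 0 \<and> greedy_prec b i (A ! k)}"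
      hence jD: "j \<in> D" and pr: "greedy_prec b j (A ! k)" using bD by auto
      have "\<bar>b (A ! k)\<bar> \<le> \<bar>b j\<bar>" using pr by (auto simp: greedy_prec_def)
      hence "1 < \<bar>b j\<bar>" using gt1[OF k] by simp
      hence "j \<in> (\<lambda>k. A ! k) ` S" using bO[OF jD] by force
      then obtain k' where k': "k' \<in> S" "j = A ! k'" by blast
      have "k' < k"
      proof -
        have "k' < L" "k < L" using S k k' by auto
        show ?thesis
        proof (cases "k' = k")
          case True thus ?thesis using pr k' by (simp add: greedy_prec_def)
        next
          case False
          have "\<bar>b (A ! k)\<bar> \<le> \<bar>b (A ! k')\<bar>" using pr k' by (auto simp: greedy_prec_def)
          hence "\<delta> * (real L - real k) \<le> \<delta> * (real L - real k')" using bS[OF k] bS[OF k'(1)] by simp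
          hence "real L - real k \<le> real L - real k'" using \<delta> by simp
          thus ?thesis using False by simp
        qed
      qed
      thus "j \<in> (\<lambda>k. A ! k) ` {k'\<in>S. k' < k}" using k' by blast
    next
      fix j assume "j \<in> (\<lambda>k. A ! k) ` {k'\<in>S. k' < k}"
      then obtain k' where k': "k' \<in> S" "k' < k" "j = A ! k'" by blast
      have "k < L" using S k by auto
      have "\<delta> * (real L - real k) < \<delta> * (real L - real k')" using \<delta> k' by simp
      hence "\<bar>b (A ! k)\<bar> < \<bar>b j\<bar>" using bS[OF k] bS[OF k'(1)] k' by simp
      moreover have "b j \<noteq> 0" using bD SD k' by simp
      ultimately show "j \<in> {i. b i \<noteq> 0 \<and> greedy_prec b i (A ! k)}" by (simp add: greedy_prec_def)
    qed
    hence "greedy_rank b (A ! k) = card ((\<lambda>k. A ! k) ` {k'\<in>S. k' < k})"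
      unfolding greedy_rank_def by simp
    also have "\<dots> = card {k'\<in>S. k' < k}"
      by (rule card_image) (rule inj_on_subset[OF inj], auto)
    finally show ?thesis .
  qed
  have rankO: "card S \<le> greedy_rank b n" if n: "n \<in> D" "n \<notin> (\<lambda>k. A ! k) ` S" for n
  proof -
    have "(\<lambda>k. A ! k) ` S \<subseteq> {i. b i \<noteq> 0 \<and> greedy_prec b i n}"
      using gt1 bO[OF n] bD SD by (auto simp: greedy_prec_def)
    moreover have "finite {i. b i \<noteq> 0 \<and> greedy_prec b i n}"
      using D bD by (auto intro: finite_subset)
    ultimately have "card ((\<lambda>k. A ! k) ` S) \<le> greedy_rank b n"
      unfolding greedy_rank_def by (rule card_mono[rotated])
    thus ?thesis using card_image[OF inj] by simp
  qed
  have ri: "card {k\<in>S. k < i} \<le> card S" using finS by (intro card_mono) auto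
  show ?thesis
  proof (intro set_eqI iffI)
    fix j assume j: "j \<in> greedy_set b (card {k\<in>S. k < i})"
    hence jD: "j \<in> D" and r: "greedy_rank b j < card {k\<in>S. k < i}"
      using bD by (auto simp: greedy_set_def)
    have "j \<in> (\<lambda>k. A ! k) ` S"
    proof (rule ccontr)
      assume "j \<notin> (\<lambda>k. A ! k) ` S"
      from rankO[OF jD this] r ri show False by simp
    qed
    then obtain k where k: "k \<in> S" "j = A ! k" by blast
    have "k < i" using r rankS[OF k(1)] k card_lt_mono[OF finS k(1), of i] by simp
    thus "j \<in> (\<lambda>k. A ! k) ` {k\<in>S. k < i}" using k by blast
  next
    fix j assume "j \<in> (\<lambda>k. A ! k) ` {k\<in>S. k < i}"
    then obtain k where k: "k \<in> S" "k < i" "j = A ! k" by blast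
    have "greedy_rank b j < card {k\<in>S. k < i}"
      using rankS[OF k(1)] k card_lt_mono[OF finS k(1), of i] by simp
    moreover have "b j \<noteq> 0" using bD SD k by simp
    ultimately show "j \<in> greedy_set b (card {k\<in>S. k < i})" by (simp add: greedy_set_def)
  qed
qed



lemma layer:
  fixes \<Phi> :: "(nat \<Rightarrow> real) \<Rightarrow> real" and SS :: "nat set set" and I :: "nat set"
  assumes I: "finite I"
    and sub: "\<And>c d. \<Phi> (\<lambda>k. c k + d k) \<le> \<Phi> c + \<Phi> d"
    and hom: "\<And>v c. 0 \<le> v \<Longrightarrow> \<Phi> (\<lambda>k. v * c k) \<le> v * \<Phi> c"
    and bnd: "\<And>T. T \<in> SS \<Longrightarrow> \<Phi> (indicator T) \<le> B"
    and B: "0 \<le> B"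
  shows "(\<forall>k. 0 \<le> c k \<and> c k \<le> s) \<Longrightarrow> (\<forall>k. k \<notin> I \<longrightarrow> c k = 0) \<Longrightarrow>
         (\<forall>v>0. {k. v \<le> c k} \<in> SS) \<Longrightarrow> \<Phi> c \<le> s * B"
proof (induction "card (c ` I \<inter> {0<..})" arbitrary: c s rule: less_induct)
  case less
  note cb = less.prems(1) and cI = less.prems(2) and lev = less.prems(3)
  define V where "V = c ` I \<inter> {0<..}"
  have finV: "finite V" using I by (simp add: V_def)
  have s0: "0 \<le> s" using cb by (meson order_trans)
  show ?case
  proof (cases "V = {}")
    case True
    have c0: "c k = 0" for k
    proof (cases "k \<in> I")
      case True
      hence "\<not> 0 < c k" using \<open>V = {}\<close> by (auto simp: V_def)
      thus ?thesis using cb by (meson antisym not_less)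
    next
      case False thus ?thesis using cI by blast
    qed
    have ceq: "(\<lambda>k. 0 * c k) = c" using c0 by (simp add: fun_eq_iff)
    have "\<Phi> c \<le> 0 * \<Phi> c" using hom[of 0 c, OF order_refl] by (simp only: ceq)
    also have "\<dots> \<le> s * B" using s0 B by simp
    finally show ?thesis .
  next
    case False
    define v1 where "v1 = Min V"
    have v1V: "v1 \<in> V" using False finV by (simp add: v1_def)
    have v1pos: "0 < v1" using v1V by (auto simp: V_def)
    have v1min: "y \<in> V \<Longrightarrow> v1 \<le> y" for y using finV by (simp add: v1_def)
    have v1s: "v1 \<le> s" using v1V cb by (auto simp: V_def)
    have small0: "c k = 0" if "c k < v1" for k
    proof (cases "k \<in> I")
      case True
      show ?thesis
      proof (rule ccontr)
        assume "c k \<noteq> 0"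
        hence "c k \<in> V" using True cb by (auto simp: V_def order.order_iff_strict)
        thus False using v1min that by force
      qed
    next
      case False thus ?thesis using cI by blast
    qed
    define T where "T = {k. v1 \<le> c k}"
    define c' where "c' k = c k - v1 * indicator T k" for k
    have c_eq: "c = (\<lambda>k. v1 * indicator T k + c' k)" by (auto simp: c'_def)
    have c'b: "\<forall>k. 0 \<le> c' k \<and> c' k \<le> s - v1"
    proof
      fix k show "0 \<le> c' k \<and> c' k \<le> s - v1"
      proof (cases "v1 \<le> c k")
        case True thus ?thesis using cb by (auto simp: c'_def T_def)
      next
        case False thus ?thesis using small0[of k] v1s by (auto simp: c'_def T_def)
      qed
    qed
    have c'I: "\<forall>k. k \<notin> I \<longrightarrow> c' k = 0"
      using cI v1pos by (auto simp: c'_def T_def)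
    have c'lev: "\<forall>u>0. {k. u \<le> c' k} \<in> SS"
    proof (intro allI impI)
      fix u :: real assume u: "0 < u"
      have "{k. u \<le> c' k} = {k. u + v1 \<le> c k}"
      proof (intro set_eqI iffI)
        fix k assume "k \<in> {k. u \<le> c' k}"
        hence "u \<le> c' k" by simp
        thus "k \<in> {k. u + v1 \<le> c k}" using u small0[of k] by (cases "v1 \<le> c k") (auto simp: c'_def T_def)
      next
        fix k assume "k \<in> {k. u + v1 \<le> c k}"
        thus "k \<in> {k. u \<le> c' k}" using u by (auto simp: c'_def T_def)
      qed
      thus "{k. u \<le> c' k} \<in> SS" using lev u v1pos by simp
    qed
    have "c' ` I \<inter> {0<..} \<subseteq> (\<lambda>y. y - v1) ` (V - {v1})"
    proof
      fix y assume "y \<in> c' ` I \<inter> {0<..}"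
      then obtain k where k: "k \<in> I" "y = c' k" "0 < c' k" by auto
      have "v1 \<le> c k"
      proof (rule ccontr)
        assume "\<not> v1 \<le> c k"
        hence "c' k = c k" by (auto simp: c'_def T_def)
        moreover have "c k = 0" using small0 \<open>\<not> v1 \<le> c k\<close> by simp
        ultimately show False using k by simp
      qed
      hence "c' k = c k - v1" by (auto simp: c'_def T_def)
      moreover have "c k \<in> V - {v1}" using k \<open>c' k = c k - v1\<close> v1pos \<open>v1 \<le> c k\<close>
        by (auto simp: V_def)
      ultimately show "y \<in> (\<lambda>y. y - v1) ` (V - {v1})" using k by blast
    qed
    hence "card (c' ` I \<inter> {0<..}) \<le> card ((\<lambda>y. y - v1) ` (V - {v1}))"
      using finV by (intro card_mono) auto
    also have "\<dots> \<le> card (V - {v1})" using finV by (intro card_image_le) auto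
    also have "\<dots> < card V" using finV v1V by (intro card_Diff1_less)
    finally have lt: "card (c' ` I \<inter> {0<..}) < card (c ` I \<inter> {0<..})" by (simp add: V_def)
    have IH: "\<Phi> c' \<le> (s - v1) * B" using less.hyps[OF lt c'b c'I c'lev] .
    have "\<Phi> c \<le> \<Phi> (\<lambda>k. v1 * indicator T k) + \<Phi> c'"
      using sub[of "\<lambda>k. v1 * indicator T k" c'] c_eq by simp
    also have "\<dots> \<le> v1 * \<Phi> (indicator T) + \<Phi> c'"
      using hom[of v1 "indicator T"] v1pos by simp
    also have "\<dots> \<le> v1 * B + (s - v1) * B"
      using bnd[of T] lev v1pos IH unfolding T_def by (intro add_mono mult_left_mono) auto
    also have "\<dots> = s * B" by (simp add: algebra_simps)
    finally show ?thesis .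
  qed
qed

lemma partition_levels:
  fixes y K :: real
  assumes "0 \<le> y" "y \<le> K"
  shows "(\<Sum>j<J. (if K / 2^j / 2 < y \<and> y \<le> K / 2^j then y else 0)) + (if y \<le> K / 2^J then y else 0) = y"
proof (induction J)
  case 0 thus ?case using assms by simp
next
  case (Suc J)
  have "(if K / 2^J / 2 < y \<and> y \<le> K / 2^J then y else 0) + (if y \<le> K / 2^Suc J then y else 0)
        = (if y \<le> K / 2^J then y else 0)"
    using assms mult_left_mono[of "2^J" "2 * 2^J" y] by (auto simp: field_simps)
  thus ?case using Suc by simp
qed



definition band :: "(nat \<Rightarrow> real) \<Rightarrow> real \<Rightarrow> nat set" where
  "band a t = {n. t / 2 < \<bar>a n\<bar> \<and> \<bar>a n\<bar> \<le> t}"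

lemma sgn_div_abs: "a \<noteq> 0 \<Longrightarrow> s / \<bar>a\<bar> * a = s * sgn (a::real)"
  by (cases "a > 0") (auto simp: sgn_if)

locale uqgs =
  fixes e :: "nat \<Rightarrow> 'a::banach_lattice" and C c Ce :: real
  assumes bs: "basic_sequence e"
    and cpos: "0 < c" and elow: "\<And>n. c \<le> norm (e n)" and eup: "\<And>n. norm (e n) \<le> Ce"
    and uqg: "\<And>m x. x \<in> cspan e \<Longrightarrow> norm x = 1 \<Longrightarrow>
               norm (lsup (map (\<lambda>n. \<bar>greedy_approx e n x\<bar>) [1..<m+1])) \<le> C"
begin

lemma sn: "semi_normalized e"
  using cpos elow eup unfolding semi_normalized_def by blast

lemma fin_thr: "x \<in> cspan e \<Longrightarrow> 0 < v \<Longrightarrow> finite (thr (\<lambda>n. coef e n x) v)"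
  using finite_thr[OF bs sn] .

lemma G_zero: "greedy_approx e r 0 = 0"
  unfolding greedy_approx_def by (simp add: coef_zero[OF bs] greedy_set_def)

lemma G_scale:
  assumes "x \<in> cspan e"
  shows "greedy_approx e r (t *\<^sub>R x) = t *\<^sub>R greedy_approx e r x"
proof (cases "t = 0")
  case True thus ?thesis by (simp add: G_zero)
next
  case False
  have "greedy_set (\<lambda>n. coef e n (t *\<^sub>R x)) r = greedy_set (\<lambda>n. coef e n x) r"
    unfolding coef_scale[OF bs assms] using greedy_set_scale[OF False] .
  thus ?thesis unfolding greedy_approx_def
    by (simp add: coef_scale[OF bs assms] scaleR_sum_right)
qed

lemma G_lsup:
  assumes z: "z \<in> cspan e"
  shows "norm (lsup (map (\<lambda>n. \<bar>greedy_approx e n z\<bar>) [1..<m+1])) \<le> C * norm z"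
proof (cases "z = 0")
  case True
  have "lsup (map (\<lambda>n. \<bar>greedy_approx e n z\<bar>) [1..<m+1]) \<le> 0"
    by (rule lsup_le) (auto simp: True G_zero)
  moreover have "0 \<le> lsup (map (\<lambda>n. \<bar>greedy_approx e n z\<bar>) [1..<m+1])"
    by (rule lsup_nonneg) auto
  ultimately show ?thesis using True by simp
next
  case False
  define x where "x = (1 / norm z) *\<^sub>R z"
  have xs: "x \<in> cspan e" unfolding x_def by (rule scale_in_cspan[OF bs z])
  have nx: "norm x = 1" using False by (simp add: x_def)
  have zx: "z = norm z *\<^sub>R x" using False by (simp add: x_def)
  have Gz: "greedy_approx e n z = norm z *\<^sub>R greedy_approx e n x" for n
    by (subst zx) (rule G_scale[OF xs])
  have "lsup (map (\<lambda>n. \<bar>greedy_approx e n z\<bar>) [1..<m+1])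
        \<le> norm z *\<^sub>R lsup (map (\<lambda>n. \<bar>greedy_approx e n x\<bar>) [1..<m+1])"
  proof (rule lsup_le)
    fix y assume "y \<in> set (map (\<lambda>n. \<bar>greedy_approx e n z\<bar>) [1..<m+1])"
    then obtain n where n: "n \<in> set [1..<m+1]" "y = \<bar>greedy_approx e n z\<bar>" by auto
    have "y = norm z *\<^sub>R \<bar>greedy_approx e n x\<bar>" using n by (simp add: Gz abs_scaleR_pos)
    also have "\<dots> \<le> norm z *\<^sub>R lsup (map (\<lambda>n. \<bar>greedy_approx e n x\<bar>) [1..<m+1])"
      using n by (intro scaleR_left_mono lsup_ge) auto
    finally show "y \<le> \<dots>" .
  next
    show "0 \<le> norm z *\<^sub>R lsup (map (\<lambda>n. \<bar>greedy_approx e n x\<bar>) [1..<m+1])"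
      by (intro scaleR_nonneg_nonneg lsup_nonneg) auto
  qed
  hence "norm (lsup (map (\<lambda>n. \<bar>greedy_approx e n z\<bar>) [1..<m+1]))
        \<le> norm (norm z *\<^sub>R lsup (map (\<lambda>n. \<bar>greedy_approx e n x\<bar>) [1..<m+1]))"
    by (intro norm_mono_bl lsup_nonneg) auto
  also have "\<dots> = norm z * norm (lsup (map (\<lambda>n. \<bar>greedy_approx e n x\<bar>) [1..<m+1]))" by simp
  also have "\<dots> \<le> norm z * C" using uqg[OF xs nx] by (intro mult_left_mono) auto
  finally show ?thesis by (simp add: mult.commute)
qed

lemma G_bound:
  assumes z: "z \<in> cspan e" and r: "1 \<le> r"
  shows "norm (greedy_approx e r z) \<le> C * norm z"
proof -
  have "\<bar>greedy_approx e r z\<bar> \<le> lsup (map (\<lambda>n. \<bar>greedy_approx e n z\<bar>) [1..<r+1])"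
    using r by (intro lsup_ge) auto
  hence "norm \<bar>greedy_approx e r z\<bar> \<le> norm (lsup (map (\<lambda>n. \<bar>greedy_approx e n z\<bar>) [1..<r+1]))"
    by (intro norm_mono_bl) auto
  thus ?thesis using G_lsup[OF z, of r] by (simp add: norm_abs_bl)
qed

lemma C_nonneg: "0 \<le> C"
proof -
  have "0 \<le> C * norm (e 0)"
    using G_bound[OF e_in_cspan, of 1] norm_ge_zero order_trans by blast
  moreover have "0 < norm (e 0)" using cpos elow[of 0] by linarith
  ultimately show ?thesis by (simp add: zero_le_mult_iff)
qed

lemma thr_sum_bound:
  assumes x: "x \<in> cspan e" and u: "0 < u"
  shows "norm (\<Sum>n\<in>thr (\<lambda>n. coef e n x) u. coef e n x *\<^sub>R e n) \<le> C * norm x"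
proof -
  let ?T = "thr (\<lambda>n. coef e n x) u"
  have gs: "greedy_set (\<lambda>n. coef e n x) (card ?T) = ?T"
    by (rule greedy_set_thr) (use fin_thr[OF x] u in auto)
  show ?thesis
  proof (cases "card ?T = 0")
    case True
    hence "?T = {}" using fin_thr[OF x u] by simp
    thus ?thesis using C_nonneg by simp
  next
    case False
    have "norm (greedy_approx e (card ?T) x) \<le> C * norm x"
      using False by (intro G_bound x) simp
    thus ?thesis unfolding greedy_approx_def gs .
  qed
qed

lemma trunc:
  assumes x: "x \<in> cspan e" and s: "0 < s"
  shows "s * norm (\<Sum>n\<in>thr (\<lambda>n. coef e n x) s. sgn (coef e n x) *\<^sub>R e n) \<le> 2 * C * norm x"
proof -
  define a where "a n = coef e n x" for n
  define I where "I = thr a s"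
  have finI: "finite I" unfolding I_def a_def using fin_thr[OF x s] .
  define \<Phi> where "\<Phi> \<mu> = norm (\<Sum>n\<in>I. (\<mu> n * a n) *\<^sub>R e n)" for \<mu> :: "nat \<Rightarrow> real"
  define SS where "SS = {T. \<exists>w. T = {n\<in>I. \<bar>a n\<bar> \<le> w}}"
  define \<mu> where "\<mu> n = (if n \<in> I then s / \<bar>a n\<bar> else 0)" for n
  have sub: "\<Phi> (\<lambda>k. c k + d k) \<le> \<Phi> c + \<Phi> d" for c d
  proof -
    have "\<Phi> (\<lambda>k. c k + d k) = norm ((\<Sum>n\<in>I. (c n * a n) *\<^sub>R e n) + (\<Sum>n\<in>I. (d n * a n) *\<^sub>R e n))"
      unfolding \<Phi>_def by (simp add: distrib_right scaleR_add_left sum.distrib)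
    thus ?thesis unfolding \<Phi>_def by (simp add: norm_triangle_ineq)
  qed
  have hom: "\<Phi> (\<lambda>k. v * c k) \<le> v * \<Phi> c" if "0 \<le> v" for v c
  proof -
    have "\<Phi> (\<lambda>k. v * c k) = norm (v *\<^sub>R (\<Sum>n\<in>I. (c n * a n) *\<^sub>R e n))"
      unfolding \<Phi>_def by (simp add: scaleR_sum_right mult.assoc)
    thus ?thesis using that unfolding \<Phi>_def by simp
  qed
  have bnd: "\<Phi> (indicator T) \<le> 2 * C * norm x" if "T \<in> SS" for T
  proof -
    obtain w where w: "T = {n\<in>I. \<bar>a n\<bar> \<le> w}" using \<open>T \<in> SS\<close> by (auto simp: SS_def)
    have Teq: "T = I - thr a (max s w)" unfolding w I_def thr_def by auto
    have sub2: "thr a (max s w) \<subseteq> I" unfolding I_def thr_def by auto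
    have "\<Phi> (indicator T) = norm (\<Sum>n\<in>I. if n \<in> T then a n *\<^sub>R e n else 0)"
      unfolding \<Phi>_def by (intro arg_cong[where f=norm] sum.cong) (auto simp: indicator_def)
    also have "(\<Sum>n\<in>I. if n \<in> T then a n *\<^sub>R e n else 0) = (\<Sum>n\<in>{n\<in>I. n \<in> T}. a n *\<^sub>R e n)"
      using finI by (simp add: sum.inter_filter)
    also have "{n\<in>I. n \<in> T} = I - thr a (max s w)" using Teq by auto
    also have "(\<Sum>n\<in>I - thr a (max s w). a n *\<^sub>R e n) = (\<Sum>n\<in>I. a n *\<^sub>R e n) - (\<Sum>n\<in>thr a (max s w). a n *\<^sub>R e n)"
      using finI sub2 by (intro sum_diff)
    also have "norm \<dots> \<le> norm (\<Sum>n\<in>I. a n *\<^sub>R e n) + norm (\<Sum>n\<in>thr a (max s w). a n *\<^sub>R e n)"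
      by (rule norm_triangle_ineq4)
    also have "\<dots> \<le> C * norm x + C * norm x"
      unfolding I_def a_def using s by (intro add_mono thr_sum_bound x) auto
    finally show ?thesis by simp
  qed
  have B: "0 \<le> 2 * C * norm x" using C_nonneg by simp
  have "\<Phi> \<mu> \<le> 1 * (2 * C * norm x)"
  proof (rule layer[OF finI, of \<Phi> SS, OF sub hom bnd B])
    show "\<forall>k. 0 \<le> \<mu> k \<and> \<mu> k \<le> 1"
      using s by (auto simp: \<mu>_def I_def thr_def)
    show "\<forall>k. k \<notin> I \<longrightarrow> \<mu> k = 0" by (simp add: \<mu>_def)
    show "\<forall>v>0. {k. v \<le> \<mu> k} \<in> SS"
    proof (intro allI impI)
      fix v :: real assume v: "0 < v"
      have "{k. v \<le> \<mu> k} = {n\<in>I. \<bar>a n\<bar> \<le> s / v}"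
      proof (intro set_eqI iffI)
        fix k assume "k \<in> {k. v \<le> \<mu> k}"
        hence k: "k \<in> I" "v \<le> s / \<bar>a k\<bar>" using v by (auto simp: \<mu>_def split: if_splits)
        have "0 < \<bar>a k\<bar>" using k(1) s by (auto simp: I_def thr_def)
        thus "k \<in> {n\<in>I. \<bar>a n\<bar> \<le> s / v}" using k v by (auto simp: field_simps)
      next
        fix k assume "k \<in> {n\<in>I. \<bar>a n\<bar> \<le> s / v}"
        hence k: "k \<in> I" "\<bar>a k\<bar> \<le> s / v" by auto
        have "0 < \<bar>a k\<bar>" using k(1) s by (auto simp: I_def thr_def)
        thus "k \<in> {k. v \<le> \<mu> k}" using k v by (auto simp: field_simps \<mu>_def)
      qed
      thus "{k. v \<le> \<mu> k} \<in> SS" unfolding SS_def by blast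
    qed
  qed
  moreover have "\<Phi> \<mu> = s * norm (\<Sum>n\<in>I. sgn (a n) *\<^sub>R e n)"
  proof -
    have "(\<Sum>n\<in>I. (\<mu> n * a n) *\<^sub>R e n) = s *\<^sub>R (\<Sum>n\<in>I. sgn (a n) *\<^sub>R e n)"
      unfolding scaleR_sum_right
    proof (rule sum.cong)
      fix n assume n: "n \<in> I"
      hence "a n \<noteq> 0" using s by (auto simp: I_def thr_def)
      hence "\<mu> n * a n = s * sgn (a n)"
        unfolding \<mu>_def using n sgn_div_abs[of "a n" s] by simp
      thus "(\<mu> n * a n) *\<^sub>R e n = s *\<^sub>R sgn (a n) *\<^sub>R e n" by simp
    qed simp
    thus ?thesis unfolding \<Phi>_def using s by simp
  qed
  ultimately show ?thesis unfolding I_def a_def by simp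
qed

lemma band_norm:
  assumes x: "x \<in> cspan e" and t: "0 < t"
  shows "norm (\<Sum>n\<in>band (\<lambda>n. coef e n x) t. sgn (coef e n x) *\<^sub>R e n) \<le> 6 * C * norm x / t"
proof -
  define a where "a n = coef e n x" for n
  have beq: "band a t = thr a (t/2) - thr a t" by (auto simp: band_def thr_def)
  have sub: "thr a t \<subseteq> thr a (t/2)" using t by (auto simp: thr_def)
  have fin: "finite (thr a (t/2))" unfolding a_def using fin_thr[OF x] t by simp
  have "(\<Sum>n\<in>band a t. sgn (a n) *\<^sub>R e n) = (\<Sum>n\<in>thr a (t/2). sgn (a n) *\<^sub>R e n) - (\<Sum>n\<in>thr a t. sgn (a n) *\<^sub>R e n)"
    unfolding beq using fin sub by (intro sum_diff)
  hence "norm (\<Sum>n\<in>band a t. sgn (a n) *\<^sub>R e n) \<le> norm (\<Sum>n\<in>thr a (t/2). sgn (a n) *\<^sub>R e n) + norm (\<Sum>n\<in>thr a t. sgn (a n) *\<^sub>R e n)"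
    by (simp add: norm_triangle_ineq4)
  moreover have "(t/2) * norm (\<Sum>n\<in>thr a (t/2). sgn (a n) *\<^sub>R e n) \<le> 2 * C * norm x"
    unfolding a_def using t by (intro trunc x) simp
  moreover have "t * norm (\<Sum>n\<in>thr a t. sgn (a n) *\<^sub>R e n) \<le> 2 * C * norm x"
    unfolding a_def using t by (intro trunc x)
  ultimately have "t * norm (\<Sum>n\<in>band a t. sgn (a n) *\<^sub>R e n) \<le> 6 * C * norm x"
    using t by (simp add: algebra_simps) (smt (verit) distrib_left mult_left_mono)
  thus ?thesis unfolding a_def using t by (simp add: field_simps)
qed

end



context uqgs begin

lemma chain_sign:
  assumes x: "x \<in> cspan e" and dist: "distinct A" and L: "length A = L"
    and D: "finite D" and Dnz: "\<And>n. n \<in> D \<Longrightarrow> coef e n x \<noteq> 0"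
    and S: "S \<subseteq> {k. k < L \<and> A ! k \<in> D}"
  shows "norm (chain (\<lambda>k. sgn (coef e (A!k) x) *\<^sub>R e (A!k)) L (indicator S))
         \<le> C * norm (\<Sum>n\<in>D. sgn (coef e n x) *\<^sub>R e n)"
proof -
  define a where "a n = coef e n x" for n
  define f where "f k = sgn (a (A!k)) *\<^sub>R e (A!k)" for k
  define N0 where "N0 = norm (\<Sum>n\<in>D. sgn (a n) *\<^sub>R e n)"
  define w where "w n = (\<Sum>k\<in>S. if A!k = n then real L - real k else 0)" for n
  define W where "W = (\<Sum>k\<in>S. (real L - real k) *\<^sub>R \<bar>f k\<bar>)"
  define N1 where "N1 = norm (\<Sum>n\<in>D. (sgn (a n) * w n) *\<^sub>R e n)"
  have S': "S \<subseteq> {..<L}" using S by auto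
  have finS: "finite S" using S' finite_subset by blast
  have inj: "inj_on (\<lambda>k. A ! k) S"
  proof (rule inj_onI)
    fix k k' assume "k \<in> S" "k' \<in> S" "A ! k = A ! k'"
    thus "k = k'" using dist S' L nth_eq_iff_index_eq[OF dist, of k k'] by auto
  qed
  have wA: "w (A!k) = real L - real k" if k: "k \<in> S" for k
  proof -
    have "w (A!k) = (\<Sum>k'\<in>S. if k' = k then real L - real k' else 0)"
      unfolding w_def
    proof (rule sum.cong)
      fix k' assume "k' \<in> S"
      hence "A ! k' = A ! k \<longleftrightarrow> k' = k" using inj k by (auto dest: inj_onD)
      thus "(if A ! k' = A ! k then real L - real k' else 0) = (if k' = k then real L - real k' else 0)"
        by simp
    qed simp
    also have "\<dots> = real L - real k" using finS k by simp
    finally show ?thesis .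
  qed
  have w0: "w n = 0" if "n \<notin> (\<lambda>k. A!k) ` S" for n
    unfolding w_def using that by (intro sum.neutral) auto
  have wnn: "0 \<le> w n" for n
    unfolding w_def using S' by (intro sum_nonneg) auto
  have Wnn: "0 \<le> W" unfolding W_def using S' by (intro sum_nonneg scaleR_nonneg_nonneg) auto
  have key: "norm (chain f L (indicator S)) \<le> C * N0 + \<delta> * (C * N1 + norm W)" if \<delta>: "0 < \<delta>" for \<delta>
  proof -
    define b where "b n = sgn (a n) * (1 + \<delta> * w n)" for n
    define y where "y = (\<Sum>n\<in>D. b n *\<^sub>R e n)"
    have yc: "y \<in> cspan e" unfolding y_def by (rule sum_in_cspan)
    define b' where "b' n = coef e n y" for n
    have b'eq: "b' n = (if n \<in> D then b n else 0)" for n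
      unfolding b'_def y_def by (rule coef_finite[OF bs D])
    have pos: "0 < 1 + \<delta> * w n" for n using \<delta> wnn[of n] by (simp add: add_pos_nonneg)
    have sgn1: "\<bar>sgn (a n)\<bar> = 1" if "n \<in> D" for n
      using Dnz[OF that] by (simp add: a_def abs_sgn)
    have gs: "greedy_set b' (card {k\<in>S. k < i}) = (\<lambda>k. A ! k) ` {k\<in>S. k < i}" for i
    proof (rule greedy_set_chain[OF dist L S' D])
      show "\<And>k. k \<in> S \<Longrightarrow> A ! k \<in> D" using S by auto
      show "b' n \<noteq> 0 \<longleftrightarrow> n \<in> D" for n
        using pos[of n] Dnz[of n] by (auto simp: b'eq b_def a_def sgn_eq_0_iff)
      show "\<bar>b' (A ! k)\<bar> = 1 + \<delta> * (real L - real k)" if "k \<in> S" for k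
      proof -
        have "A ! k \<in> D" using S that by auto
        thus ?thesis using sgn1[of "A!k"] pos[of "A!k"] wA[OF that]
          by (simp add: b'eq b_def abs_mult)
      qed
      show "\<bar>b' n\<bar> = 1" if "n \<in> D" "n \<notin> (\<lambda>k. A ! k) ` S" for n
        using that sgn1[of n] w0[of n] by (simp add: b'eq b_def abs_mult)
    qed (use \<delta> in auto)
    have Gy: "greedy_approx e (card {k\<in>S. k < i}) y = (\<Sum>k\<in>{k\<in>S. k < i}. (1 + \<delta> * (real L - real k)) *\<^sub>R f k)" for i
    proof -
      have "greedy_approx e (card {k\<in>S. k < i}) y = (\<Sum>j\<in>(\<lambda>k. A ! k) ` {k\<in>S. k < i}. b' j *\<^sub>R e j)"
        unfolding greedy_approx_def gs[unfolded b'_def] b'_def ..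
      also have "\<dots> = (\<Sum>k\<in>{k\<in>S. k < i}. b' (A!k) *\<^sub>R e (A!k))"
        by (rule sum.reindex[unfolded comp_def]) (rule inj_on_subset[OF inj], auto)
      also have "\<dots> = (\<Sum>k\<in>{k\<in>S. k < i}. (1 + \<delta> * (real L - real k)) *\<^sub>R f k)"
      proof (rule sum.cong)
        fix k assume k: "k \<in> {k\<in>S. k < i}"
        hence "A ! k \<in> D" using S by auto
        thus "b' (A!k) *\<^sub>R e (A!k) = (1 + \<delta> * (real L - real k)) *\<^sub>R f k"
          using k wA[of k] by (simp add: b'eq b_def f_def mult.commute)
      qed simp
      finally show ?thesis .
    qed
    define Gsup where "Gsup = lsup (map (\<lambda>n. \<bar>greedy_approx e n y\<bar>) [1..<L+1])"
    have Gsup0: "0 \<le> Gsup" unfolding Gsup_def by (rule lsup_nonneg) auto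
    have ch: "chain f L (indicator S) \<le> Gsup + \<delta> *\<^sub>R W"
    proof (rule chain_le)
      fix i assume i: "1 \<le> i" "i \<le> L"
      define r where "r = card {k\<in>S. k < i}"
      have rS: "r \<le> L"
      proof -
        have "r \<le> card {..<L}" unfolding r_def using S' by (intro card_mono) auto
        thus ?thesis by simp
      qed
      have GG: "\<bar>greedy_approx e r y\<bar> \<le> Gsup"
      proof (cases "r = 0")
        case True
        have "greedy_set (\<lambda>n. coef e n y) 0 = {}" by (simp add: greedy_set_def)
        hence "greedy_approx e r y = 0" using True by (simp add: greedy_approx_def)
        thus ?thesis using Gsup0 by simp
      next
        case False
        thus ?thesis unfolding Gsup_def using rS by (intro lsup_ge) (force simp: image_iff)
      qed
      have "(\<Sum>k<i. indicator S k *\<^sub>R f k) = (\<Sum>k\<in>{k\<in>S. k < i}. f k)"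
      proof -
        have "(\<Sum>k<i. indicator S k *\<^sub>R f k) = (\<Sum>k<i. if k \<in> S then f k else 0)"
          by (intro sum.cong) (auto simp: indicator_def)
        also have "\<dots> = (\<Sum>k\<in>{k\<in>{..<i}. k \<in> S}. f k)" by (rule sum.inter_filter[symmetric]) simp
        also have "{k\<in>{..<i}. k \<in> S} = {k\<in>S. k < i}" by auto
        finally show ?thesis .
      qed
      also have "\<dots> = greedy_approx e r y - \<delta> *\<^sub>R (\<Sum>k\<in>{k\<in>S. k < i}. (real L - real k) *\<^sub>R f k)"
        unfolding r_def Gy by (simp add: scaleR_add_left sum.distrib scaleR_sum_right)
      finally have eq: "(\<Sum>k<i. indicator S k *\<^sub>R f k) = \<dots>" .
      have "\<bar>\<delta> *\<^sub>R (\<Sum>k\<in>{k\<in>S. k < i}. (real L - real k) *\<^sub>R f k)\<bar>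
            = \<delta> *\<^sub>R \<bar>\<Sum>k\<in>{k\<in>S. k < i}. (real L - real k) *\<^sub>R f k\<bar>"
        using \<delta> by (simp add: abs_scaleR_pos)
      also have "\<dots> \<le> \<delta> *\<^sub>R (\<Sum>k\<in>{k\<in>S. k < i}. \<bar>(real L - real k) *\<^sub>R f k\<bar>)"
        using \<delta> by (intro scaleR_left_mono sum_abs) auto
      also have "(\<Sum>k\<in>{k\<in>S. k < i}. \<bar>(real L - real k) *\<^sub>R f k\<bar>) = (\<Sum>k\<in>{k\<in>S. k < i}. (real L - real k) *\<^sub>R \<bar>f k\<bar>)"
        using S' by (intro sum.cong) (auto simp: abs_scaleR_bl)
      also have "\<delta> *\<^sub>R \<dots> \<le> \<delta> *\<^sub>R W"
        unfolding W_def using \<delta> S' finS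
        by (intro scaleR_left_mono sum_mono2) (auto intro!: scaleR_nonneg_nonneg)
      finally have e2: "\<bar>\<delta> *\<^sub>R (\<Sum>k\<in>{k\<in>S. k < i}. (real L - real k) *\<^sub>R f k)\<bar> \<le> \<delta> *\<^sub>R W" .
      have "\<bar>\<Sum>k<i. indicator S k *\<^sub>R f k\<bar> \<le> \<bar>greedy_approx e r y\<bar> + \<bar>\<delta> *\<^sub>R (\<Sum>k\<in>{k\<in>S. k < i}. (real L - real k) *\<^sub>R f k)\<bar>"
        unfolding eq by (rule abs_triangle_ineq4)
      also have "\<dots> \<le> Gsup + \<delta> *\<^sub>R W" using GG e2 by (rule add_mono)
      finally show "\<bar>\<Sum>k<i. indicator S k *\<^sub>R f k\<bar> \<le> Gsup + \<delta> *\<^sub>R W" .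
    next
      show "0 \<le> Gsup + \<delta> *\<^sub>R W" using Gsup0 Wnn \<delta> by (simp add: add_nonneg_nonneg scaleR_nonneg_nonneg)
    qed
    have "norm (chain f L (indicator S)) \<le> norm (Gsup + \<delta> *\<^sub>R W)"
      by (intro norm_mono_bl chain_nonneg ch)
    also have "\<dots> \<le> norm Gsup + \<delta> * norm W" using \<delta> norm_triangle_ineq[of Gsup "\<delta> *\<^sub>R W"] by simp
    also have "norm Gsup \<le> C * norm y" unfolding Gsup_def by (rule G_lsup[OF yc])
    also have "norm y \<le> N0 + \<delta> * N1"
    proof -
      have "y = (\<Sum>n\<in>D. sgn (a n) *\<^sub>R e n) + \<delta> *\<^sub>R (\<Sum>n\<in>D. (sgn (a n) * w n) *\<^sub>R e n)"
        unfolding y_def b_def by (simp add: algebra_simps scaleR_sum_right sum.distrib scaleR_add_left)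
      hence "norm y \<le> norm (\<Sum>n\<in>D. sgn (a n) *\<^sub>R e n) + norm (\<delta> *\<^sub>R (\<Sum>n\<in>D. (sgn (a n) * w n) *\<^sub>R e n))"
        by (metis norm_triangle_ineq)
      thus ?thesis using \<delta> unfolding N0_def N1_def by simp
    qed
    hence "C * norm y \<le> C * (N0 + \<delta> * N1)" using C_nonneg by (rule mult_left_mono)
    finally show ?thesis by (simp add: algebra_simps)
  qed
  have Z: "0 \<le> C * N1 + norm W" using C_nonneg unfolding N1_def by simp
  have "norm (chain f L (indicator S)) \<le> C * N0"
  proof (rule field_le_epsilon)
    fix \<epsilon> :: real assume \<epsilon>: "0 < \<epsilon>"
    define \<delta> where "\<delta> = \<epsilon> / (C * N1 + norm W + 1)"
    have \<delta>: "0 < \<delta>" unfolding \<delta>_def using \<epsilon> Z by simp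
    have "\<delta> * (C * N1 + norm W) \<le> \<epsilon>"
      unfolding \<delta>_def using \<epsilon> Z by (simp add: field_simps)
    thus "norm (chain f L (indicator S)) \<le> C * N0 + \<epsilon>" using key[OF \<delta>] by simp
  qed
  thus ?thesis unfolding f_def a_def N0_def .
qed

end



lemma chain_cong: "(\<And>k. k < L \<Longrightarrow> c k = c' k) \<Longrightarrow> chain f L c = chain f L c'"
  unfolding chain_def by (intro arg_cong[where f=lsup] map_cong refl arg_cong[where f=abs] sum.cong) auto

context uqgs begin

lemma Kbound:
  assumes x: "x \<in> cspan e"
  shows "\<bar>coef e n x\<bar> \<le> 6 * C * C * norm x / c"
proof (cases "coef e n x = 0")
  case True thus ?thesis using C_nonneg cpos by simp
next
  case False
  define a where "a = (\<lambda>n. coef e n x)"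
  define t where "t = \<bar>a n\<bar>"
  have t: "0 < t" using False by (simp add: t_def a_def)
  have nD: "n \<in> band a t" using t by (simp add: band_def t_def)
  have finD: "finite (band a t)"
  proof (rule finite_subset)
    show "band a t \<subseteq> thr a (t/2)" by (auto simp: band_def thr_def)
    show "finite (thr a (t/2))" unfolding a_def using fin_thr[OF x] t by simp
  qed
  have Dnz: "coef e m x \<noteq> 0" if "m \<in> band a t" for m
    using that t by (auto simp: band_def a_def)
  have "norm (chain (\<lambda>k. sgn (coef e ([n]!k) x) *\<^sub>R e ([n]!k)) 1 (indicator {0}))
         \<le> C * norm (\<Sum>m\<in>band a t. sgn (coef e m x) *\<^sub>R e m)"
    unfolding a_def by (rule chain_sign[OF x _ _ finD[unfolded a_def]]) (use Dnz nD in \<open>auto simp: a_def\<close>)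
  moreover have "chain (\<lambda>k. sgn (coef e ([n]!k) x) *\<^sub>R e ([n]!k)) 1 (indicator {0})
                 = \<bar>sgn (coef e n x) *\<^sub>R e n\<bar>"
    by (simp add: chain_def)
  moreover have "norm \<bar>sgn (coef e n x) *\<^sub>R e n\<bar> = norm (e n)"
    using False by (simp add: norm_abs_bl abs_sgn)
  moreover have "C * norm (\<Sum>m\<in>band a t. sgn (coef e m x) *\<^sub>R e m) \<le> C * (6 * C * norm x / t)"
    using band_norm[OF x t] C_nonneg unfolding a_def by (intro mult_left_mono) auto
  ultimately have "c \<le> C * (6 * C * norm x / t)" using elow[of n] by (simp add: a_def)
  hence "c * t \<le> 6 * C * C * norm x" using t by (simp add: field_simps)
  hence "t \<le> 6 * C * C * norm x / c" using cpos by (simp add: field_simps mult.commute)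
  thus ?thesis by (simp add: t_def a_def)
qed

lemma band_chain:
  assumes x: "x \<in> cspan e" and dist: "distinct A" and L: "length A = L" and t: "0 < t"
  shows "norm (chain (\<lambda>k. sgn (coef e (A!k) x) *\<^sub>R e (A!k)) L
           (\<lambda>k. if k < L \<and> A!k \<in> band (\<lambda>n. coef e n x) t then \<bar>coef e (A!k) x\<bar> else 0))
         \<le> 6 * C * C * norm x"
proof -
  define a where "a = (\<lambda>n. coef e n x)"
  define f where "f k = sgn (a (A!k)) *\<^sub>R e (A!k)" for k
  define I where "I = {k. k < L \<and> A!k \<in> band a t}"
  define cc where "cc k = (if k < L \<and> A!k \<in> band a t then \<bar>a (A!k)\<bar> else 0)" for k
  have finI: "finite I" unfolding I_def by simp
  have finD: "finite (band a t)"
  proof (rule finite_subset)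
    show "band a t \<subseteq> thr a (t/2)" by (auto simp: band_def thr_def)
    show "finite (thr a (t/2))" unfolding a_def using fin_thr[OF x] t by simp
  qed
  have Dnz: "coef e m x \<noteq> 0" if "m \<in> band a t" for m
    using that t by (auto simp: band_def a_def)
  define B where "B = C * (6 * C * norm x / t)"
  have B0: "0 \<le> B" unfolding B_def using C_nonneg t by simp
  have bnd: "norm (chain f L (indicator T)) \<le> B" if "T \<in> Pow I" for T
  proof -
    have "norm (chain f L (indicator T)) \<le> C * norm (\<Sum>m\<in>band a t. sgn (coef e m x) *\<^sub>R e m)"
      unfolding f_def a_def
      by (rule chain_sign[OF x dist L finD[unfolded a_def]]) (use that Dnz in \<open>auto simp: I_def a_def\<close>)
    also have "\<dots> \<le> B"
      unfolding B_def using band_norm[OF x t] C_nonneg unfolding a_def by (intro mult_left_mono) auto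
    finally show ?thesis .
  qed
  have "norm (chain f L cc) \<le> t * B"
  proof (rule layer[OF finI, of "\<lambda>c. norm (chain f L c)" "Pow I"])
    show "\<And>c d. norm (chain f L (\<lambda>k. c k + d k)) \<le> norm (chain f L c) + norm (chain f L d)"
      by (rule chain_norm_add)
    show "\<And>v c. 0 \<le> v \<Longrightarrow> norm (chain f L (\<lambda>k. v * c k)) \<le> v * norm (chain f L c)"
      by (rule chain_norm_scale)
    show "\<And>T. T \<in> Pow I \<Longrightarrow> norm (chain f L (indicator T)) \<le> B" by (rule bnd)
    show "0 \<le> B" by (rule B0)
    show "\<forall>k. 0 \<le> cc k \<and> cc k \<le> t" using t by (auto simp: cc_def band_def)
    show "\<forall>k. k \<notin> I \<longrightarrow> cc k = 0" by (auto simp: cc_def I_def)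
    show "\<forall>v>0. {k. v \<le> cc k} \<in> Pow I"
      by (auto simp: cc_def I_def split: if_splits)
  qed
  also have "t * B = 6 * C * C * norm x" unfolding B_def using t by (simp add: field_simps)
  finally show ?thesis unfolding f_def cc_def a_def .
qed

end



context uqgs begin

lemma main_est:
  assumes x: "x \<in> cspan e" and nx: "norm x = 1" and dist: "distinct A"
    and Lm: "length A \<le> m" and m: "2 \<le> m"
  shows "norm (Pvee e A x) \<le> (12 * C * C + (6 * C * C / c + 1) * Ce) * log 2 (real m)"
proof -
  define L where "L = length A"
  define a where "a = (\<lambda>n. coef e n x)"
  define f where "f k = sgn (a (A!k)) *\<^sub>R e (A!k)" for k
  define K where "K = 6 * C * C / c + 1"
  define J where "J = nat \<lceil>log 2 (real m)\<rceil>"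
  define cc where "cc k = \<bar>a (A!k)\<bar>" for k
  define cj where "cj j k = (if k < L \<and> A!k \<in> band a (K / 2^j) then \<bar>a (A!k)\<bar> else 0)" for j k
  define ct where "ct k = (if \<bar>a (A!k)\<bar> \<le> K / 2^J then \<bar>a (A!k)\<bar> else 0)" for k
  have C0: "0 \<le> C" by (rule C_nonneg)
  have K0: "0 < K" unfolding K_def using C0 cpos by (simp add: add_nonneg_pos)
  have Ce0: "0 \<le> Ce" using cpos elow[of 0] eup[of 0] by linarith
  have aK: "\<bar>a n\<bar> \<le> K" for n
    using Kbound[OF x, of n] nx unfolding K_def a_def by simp
  have Pv: "Pvee e A x = chain f L cc"
    unfolding Pvee_def chain_def L_def
  proof (intro arg_cong[where f=lsup] map_cong refl arg_cong[where f=abs] sum.cong)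
    fix k show "coef e (A ! k) x *\<^sub>R e (A ! k) = cc k *\<^sub>R f k"
      by (simp add: f_def cc_def a_def abs_mult_sgn)
  qed
  have dec: "chain f L cc = chain f L (\<lambda>k. (\<Sum>j<J. cj j k) + ct k)"
  proof (rule chain_cong)
    fix k assume k: "k < L"
    have "(\<Sum>j<J. (if K / 2^j / 2 < \<bar>a (A!k)\<bar> \<and> \<bar>a (A!k)\<bar> \<le> K / 2^j then \<bar>a (A!k)\<bar> else 0))
          + (if \<bar>a (A!k)\<bar> \<le> K / 2^J then \<bar>a (A!k)\<bar> else 0) = \<bar>a (A!k)\<bar>"
      by (rule partition_levels) (use aK in auto)
    thus "cc k = (\<Sum>j<J. cj j k) + ct k"
      using k by (simp add: cc_def cj_def ct_def band_def)
  qed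
  have nf: "norm (f k) \<le> Ce" for k
  proof -
    have "norm (f k) = \<bar>sgn (a (A!k))\<bar> * norm (e (A!k))" by (simp add: f_def)
    also have "\<dots> \<le> 1 * norm (e (A!k))" by (intro mult_right_mono) (auto simp: abs_sgn_eq)
    also have "\<dots> \<le> Ce" using eup by simp
    finally show ?thesis .
  qed
  have pJ: "real m \<le> 2 ^ J"
  proof -
    have lg: "log 2 (real m) \<le> real J" unfolding J_def by linarith
    have "real m = 2 powr (log 2 (real m))" using m by simp
    also have "\<dots> \<le> 2 powr (real J)" using lg by (intro powr_mono) auto
    also have "\<dots> = 2 ^ J" by (simp add: powr_realpow)
    finally show ?thesis .
  qed
  have log1: "1 \<le> log 2 (real m)" using m by simp
  have Jle: "real J \<le> log 2 (real m) + 1" unfolding J_def using log1 by linarith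
  have h1: "norm (Pvee e A x) \<le> norm (chain f L (\<lambda>k. \<Sum>j<J. cj j k)) + norm (chain f L ct)"
    unfolding Pv dec by (rule chain_norm_add)
  have h2: "norm (chain f L (\<lambda>k. \<Sum>j<J. cj j k)) \<le> (\<Sum>j<J. norm (chain f L (cj j)))"
    by (rule chain_norm_sum) simp
  have h3: "(\<Sum>j<J. norm (chain f L (cj j))) \<le> (\<Sum>j<J. 6 * C * C)"
  proof (rule sum_mono)
    fix j
    have "0 < K / 2^j" using K0 by simp
    from band_chain[OF x dist L_def[symmetric] this]
    show "norm (chain f L (cj j)) \<le> 6 * C * C" using nx
      unfolding f_def cj_def a_def by simp
  qed
  have h4: "norm (chain f L ct) \<le> (\<Sum>k<L. \<bar>ct k\<bar> * norm (f k))" by (rule chain_norm_le_sum)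
  have h5: "(\<Sum>k<L. \<bar>ct k\<bar> * norm (f k)) \<le> (\<Sum>k<L. K / 2^J * Ce)"
  proof (rule sum_mono)
    fix k
    have "\<bar>ct k\<bar> \<le> K / 2^J" using K0 by (simp add: ct_def)
    thus "\<bar>ct k\<bar> * norm (f k) \<le> K / 2^J * Ce"
      using nf[of k] by (intro mult_mono) auto
  qed
  have h6: "(\<Sum>k<L. K / 2^J * Ce) \<le> K * Ce"
  proof -
    have "(\<Sum>k<L. K / 2^J * Ce) = real L * (K * Ce) / 2^J" by simp
    also have "\<dots> \<le> real m * (K * Ce) / 2^J"
      using Lm K0 Ce0 by (intro divide_right_mono mult_right_mono) (auto simp: L_def)
    also have "\<dots> \<le> 2^J * (K * Ce) / 2^J"
      using pJ K0 Ce0 by (intro divide_right_mono mult_right_mono) auto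
    also have "\<dots> = K * Ce" by simp
    finally show ?thesis .
  qed
  have h7: "(\<Sum>j<J. 6 * C * C) = real J * (6 * C * C)" by simp
  have h8: "real J * (6 * C * C) \<le> (log 2 (real m) + 1) * (6 * C * C)"
    using Jle C0 by (intro mult_right_mono) auto
  have h9: "(log 2 (real m) + 1) * (6 * C * C) \<le> (2 * log 2 (real m)) * (6 * C * C)"
    using log1 C0 by (intro mult_right_mono) auto
  have h10: "K * Ce \<le> K * Ce * log 2 (real m)"
    using log1 K0 Ce0 mult_left_mono[of 1 "log 2 (real m)" "K * Ce"] by simp
  have "norm (Pvee e A x) \<le> (12 * C * C + K * Ce) * log 2 (real m)"
    using h1 h2 h3 h4 h5 h6 h7 h8 h9 h10 by (simp add: algebra_simps)
  thus ?thesis unfolding K_def .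
qed

end

theorem proposition3p26:
  fixes e :: "nat \<Rightarrow> 'a::banach_lattice"
  assumes "basic_sequence e" and "semi_normalized e" and "uniformly_quasi_greedy e"
  shows "(\<lambda>m. kvee e m) \<in> O(\<lambda>m. log 2 (real m))"
proof -
  obtain c Ce where c: "0 < c" "\<And>n. c \<le> norm (e n) \<and> norm (e n) \<le> Ce"
    using assms(2) unfolding semi_normalized_def by blast
  obtain C where C: "\<And>m x. x \<in> cspan e \<Longrightarrow> norm x = 1 \<Longrightarrow>
      norm (lsup (map (\<lambda>n. \<bar>greedy_approx e n x\<bar>) [1..<m+1])) \<le> C"
    using assms(3) unfolding uniformly_quasi_greedy_def by blast
  interpret U: uqgs e C c Ce
    by unfold_locales (use assms(1) c C in auto)
  define Q where "Q = 12 * C * C + (6 * C * C / c + 1) * Ce"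
  define x0 where "x0 = (1 / norm (e 0)) *\<^sub>R e 0"
  have ne0: "0 < norm (e 0)" using c(1) c(2)[of 0] by linarith
  have x0: "x0 \<in> cspan e" "norm x0 = 1"
    unfolding x0_def using scale_in_cspan[OF assms(1) e_in_cspan] ne0 by auto
  have Pn: "0 \<le> Pvee_norm e A \<and> Pvee_norm e A \<le> Q * log 2 (real m)"
    if A: "distinct A" "length A \<le> m" and m: "2 \<le> m" for A m
  proof -
    let ?P = "{norm (Pvee e A x) |x. x \<in> cspan e \<and> norm x = 1}"
    have ne: "?P \<noteq> {}" using x0 by blast
    have ub: "\<And>y. y \<in> ?P \<Longrightarrow> y \<le> Q * log 2 (real m)"
      using U.main_est A m unfolding Q_def by blast
    hence bdd: "bdd_above ?P" by (meson bdd_above_def)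
    have "Sup ?P \<le> Q * log 2 (real m)" using ne ub by (rule cSup_least)
    moreover have "norm (Pvee e A x0) \<le> Sup ?P" using x0 bdd by (intro cSup_upper) auto
    ultimately show ?thesis unfolding Pvee_norm_def using norm_ge_zero order_trans by blast
  qed
  have kb: "norm (kvee e m) \<le> Q * norm (log 2 (real m))" if m: "2 \<le> m" for m
  proof -
    let ?K = "{Pvee_norm e A |A. distinct A \<and> length A \<le> m}"
    have ne: "?K \<noteq> {}" by (rule ex_in_conv[THEN iffD1], rule exI[of _ "Pvee_norm e []"]) auto
    have ub: "\<And>y. y \<in> ?K \<Longrightarrow> y \<le> Q * log 2 (real m)" using Pn m by blast
    hence bdd: "bdd_above ?K" by (meson bdd_above_def)
    have le: "Sup ?K \<le> Q * log 2 (real m)" using ne ub by (rule cSup_least)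
    have "Pvee_norm e [] \<le> Sup ?K" using bdd by (intro cSup_upper) auto
    moreover have "0 \<le> Pvee_norm e []" using Pn[of "[]" m] m by simp
    ultimately have ge: "0 \<le> Sup ?K" by linarith
    have lg: "0 \<le> log 2 (real m)" using m by simp
    show ?thesis using le ge lg unfolding kvee_def by simp
  qed
  show ?thesis
  proof (rule bigoI[where c=Q])
    show "\<forall>\<^sub>F m in at_top. norm (kvee e m) \<le> Q * norm (log 2 (real m))"
      unfolding eventually_at_top_linorder using kb by blast
  qed
qed

end
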